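(* Let $G$ be a finite group and let $S$ be a set of non-identity arrows of $G$. Let $(K,H)$ be a non-identity arrow (so $K< H\leqslant G$). If $(K,H)\in\langle S\rangle$, then there exist an arrow $(K',H')\in S$ and an element $g\in G$ such that $K\leqslant gK'g^{-1}$ and $H\leqslant gH'g^{-1}$.
   Context: For a finite group $G$, an arrow is a pair $(K,H)$ of subgroups with $K\leqslant H$; it is an identity arrow if $K=H$. A $G$-transfer system is a set $\mathsf{T}$ of arrows containing all identity arrows and closed under composition ($(A,B),(B,C)\in\mathsf{T}\Rightarrow(A,C)\in\mathsf{T}$), conjugation ($(A,B)\in\mathsf{T}\Rightarrow(gAg^{-1},gBg^{-1})\in\mathsf{T}$ for all $g\in G$) and restriction ($(A,B)\in\mathsf{T}$, $L\leqslant B\Rightarrow(A\cap L,L)\in\mathsf{T}$). For a set $S$ of arrows, $\langle S\rangle$ denotes the smallest $G$-transfer system containing $S$. *)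

theory Defs
  imports "HOL-Algebra.Group"
begin

definition conj_set :: "('a, 'b) monoid_scheme \<Rightarrow> 'a \<Rightarrow> 'a set \<Rightarrow> 'a set" where
  "conj_set G g A = (\<lambda>a. g \<otimes>\<^bsub>G\<^esub> a \<otimes>\<^bsub>G\<^esub> inv\<^bsub>G\<^esub> g) ` A"

definition arrows :: "('a, 'b) monoid_scheme \<Rightarrow> ('a set \<times> 'a set) set" where
  "arrows G = {(K, H). subgroup K G \<and> subgroup H G \<and> K \<subseteq> H}"

definition transfer_system :: "('a, 'b) monoid_scheme \<Rightarrow> ('a set \<times> 'a set) set \<Rightarrow> bool" where
  "transfer_system G T \<longleftrightarrow>
     T \<subseteq> arrows G \<and>
     (\<forall>H. subgroup H G \<longrightarrow> (H, H) \<in> T) \<and>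
     (\<forall>A B C. (A, B) \<in> T \<longrightarrow> (B, C) \<in> T \<longrightarrow> (A, C) \<in> T) \<and>
     (\<forall>A B g. (A, B) \<in> T \<longrightarrow> g \<in> carrier G \<longrightarrow> (conj_set G g A, conj_set G g B) \<in> T) \<and>
     (\<forall>A B L. (A, B) \<in> T \<longrightarrow> subgroup L G \<longrightarrow> L \<subseteq> B \<longrightarrow> (A \<inter> L, L) \<in> T)"

definition generated_ts :: "('a, 'b) monoid_scheme \<Rightarrow> ('a set \<times> 'a set) set \<Rightarrow> ('a set \<times> 'a set) set" where
  "generated_ts G S = \<Inter> {T. transfer_system G T \<and> S \<subseteq> T}"

end

theory Submission
  imports Defs
begin

lemma conj_hom:
  fixes G (structure)
  assumes "group G" "g \<in> carrier G"
  shows "(\<lambda>a. g \<otimes>\<^bsub>G\<^esub> a \<otimes>\<^bsub>G\<^esub> inv\<^bsub>G\<^esub> g) \<in> hom G G"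
proof -
  interpret group G by fact
  show ?thesis
  proof (rule homI)
    fix x y assume xy: "x \<in> carrier G" "y \<in> carrier G"
    have "g \<otimes> x \<otimes> inv g \<otimes> (g \<otimes> y \<otimes> inv g) = g \<otimes> x \<otimes> (inv g \<otimes> g) \<otimes> y \<otimes> inv g"
      using xy assms(2) by (simp add: m_assoc[symmetric]) (simp add: m_assoc)
    also have "\<dots> = g \<otimes> (x \<otimes> y) \<otimes> inv g" using xy assms(2) by (simp add: m_assoc)
    finally show "g \<otimes> (x \<otimes> y) \<otimes> inv g = g \<otimes> x \<otimes> inv g \<otimes> (g \<otimes> y \<otimes> inv g)" by simp
  qed (use assms(2) in simp)
qed

lemma conj_subgroup:
  assumes "group G" "g \<in> carrier G" "subgroup A G"
  shows "subgroup (conj_set G g A) G"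
proof -
  have "group_hom G G (\<lambda>a. g \<otimes>\<^bsub>G\<^esub> a \<otimes>\<^bsub>G\<^esub> inv\<^bsub>G\<^esub> g)"
    using conj_hom[OF assms(1,2)] assms(1) by (simp add: group_hom_def group_hom_axioms_def)
  then show ?thesis unfolding conj_set_def
    using group_hom.subgroup_img_is_subgroup assms(3) by blast
qed

lemma conj_mono: "A \<subseteq> B \<Longrightarrow> conj_set G g A \<subseteq> conj_set G g B"
  unfolding conj_set_def by blast

lemma conj_comp:
  fixes G (structure)
  assumes "group G" "g \<in> carrier G" "h \<in> carrier G" "A \<subseteq> carrier G"
  shows "conj_set G h (conj_set G g A) = conj_set G (h \<otimes>\<^bsub>G\<^esub> g) A"
proof -
  interpret group G by fact
  have "h \<otimes> (g \<otimes> a \<otimes> inv g) \<otimes> inv h = h \<otimes> g \<otimes> a \<otimes> inv (h \<otimes> g)" if "a \<in> carrier G" for a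
    using that assms by (simp add: m_assoc inv_mult_group)
  then show ?thesis unfolding conj_set_def image_image using assms(4)
    by (intro image_cong) auto
qed

lemma conj_one:
  fixes G (structure)
  assumes "group G" "A \<subseteq> carrier G"
  shows "conj_set G \<one>\<^bsub>G\<^esub> A = A"
proof -
  interpret group G by fact
  show ?thesis unfolding conj_set_def using assms(2)
    by (auto simp: image_iff) (metis subsetD r_one l_one)
qed

theorem lemma2p9:
  fixes G (structure) and S :: "('a set \<times> 'a set) set" and K H :: "'a set"
  assumes "group G" and "finite (carrier G)"
    and "S \<subseteq> arrows G" and "\<forall>(A, B) \<in> S. A \<noteq> B"
    and "(K, H) \<in> arrows G" and "K \<noteq> H"
    and "(K, H) \<in> generated_ts G S"
  shows "\<exists>K' H' g. (K', H') \<in> S \<and> g \<in> carrier G \<and>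
           K \<subseteq> conj_set G g K' \<and> H \<subseteq> conj_set G g H'"
proof -
  interpret group G by fact
  define W where "W = (\<lambda>(K::'a set) (H::'a set). \<exists>K' H' g. (K', H') \<in> S \<and> g \<in> carrier G \<and>
           K \<subseteq> conj_set G g K' \<and> H \<subseteq> conj_set G g H')"
  define T where "T = {(K, H). (K, H) \<in> arrows G \<and> (K = H \<or> W K H)}"
  have sub: "A \<subseteq> carrier G" if "subgroup A G" for A using that subgroup.subset by blast
  have "transfer_system G T"
    unfolding transfer_system_def
  proof (intro conjI allI impI)
    show "T \<subseteq> arrows G" unfolding T_def by auto
  next
    fix H assume "subgroup H G" then show "(H, H) \<in> T" unfolding T_def arrows_def by auto
  next
    fix A B C assume ab: "(A, B) \<in> T" and bc: "(B, C) \<in> T"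
    have ar: "(A, C) \<in> arrows G" using ab bc unfolding T_def arrows_def by auto
    show "(A, C) \<in> T"
    proof (cases "B = C")
      case True then show ?thesis using ab by simp
    next
      case False
      then have "W B C" using bc unfolding T_def by auto
      then have "W A C" using ab unfolding W_def T_def arrows_def by blast
      then show ?thesis using ar unfolding T_def by auto
    qed
  next
    fix A B g assume ab: "(A, B) \<in> T" and g: "g \<in> carrier G"
    have ar: "(conj_set G g A, conj_set G g B) \<in> arrows G"
      using ab g conj_subgroup[OF assms(1) g] conj_mono[of A B G g] unfolding T_def arrows_def by auto
    show "(conj_set G g A, conj_set G g B) \<in> T"
    proof (cases "A = B")
      case True then show ?thesis using ar unfolding T_def by auto
    next
      case False
      then have "W A B" using ab unfolding T_def by auto
      then obtain K' H' h where kh: "(K', H') \<in> S" "h \<in> carrier G" "A \<subseteq> conj_set G h K'"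
        "B \<subseteq> conj_set G h H'" unfolding W_def by blast
      have ks: "K' \<subseteq> carrier G" "H' \<subseteq> carrier G" using kh(1) assms(3) sub unfolding arrows_def by auto
      have "conj_set G g A \<subseteq> conj_set G (g \<otimes> h) K'"
        using conj_mono[OF kh(3), of G g] conj_comp[OF assms(1) kh(2) g ks(1)] by simp
      moreover have "conj_set G g B \<subseteq> conj_set G (g \<otimes> h) H'"
        using conj_mono[OF kh(4), of G g] conj_comp[OF assms(1) kh(2) g ks(2)] by simp
      ultimately have "W (conj_set G g A) (conj_set G g B)"
        unfolding W_def using kh g by blast
      then show ?thesis using ar unfolding T_def by auto
    qed
  next
    fix A B L assume ab: "(A, B) \<in> T" and L: "subgroup L G" "L \<subseteq> B"
    have ar: "(A \<inter> L, L) \<in> arrows G"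
      using ab L subgroups_Inter_pair unfolding T_def arrows_def by auto
    show "(A \<inter> L, L) \<in> T"
    proof (cases "A = B")
      case True then show ?thesis using ar L unfolding T_def by (auto simp: Int_absorb1)
    next
      case False
      then have "W A B" using ab unfolding T_def by auto
      then have "W (A \<inter> L) L" using L unfolding W_def by blast
      then show ?thesis using ar unfolding T_def by auto
    qed
  qed
  moreover have "S \<subseteq> T"
  proof
    fix x assume x: "x \<in> S"
    obtain A B where xe: "x = (A, B)" by fastforce
    have ar: "(A, B) \<in> arrows G" using x xe assms(3) by auto
    then have "W A B" unfolding W_def using x xe conj_one[OF assms(1)] sub
      unfolding arrows_def by (intro exI[of _ A] exI[of _ B] exI[of _ \<one>]) auto
    then show "x \<in> T" using ar xe unfolding T_def by auto
  qed
  ultimately have "generated_ts G S \<subseteq> T" unfolding generated_ts_def by blast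
  then have "(K, H) \<in> T" using assms(7) by blast
  then show ?thesis using assms(6) unfolding T_def W_def by auto
qed

end
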